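(* (a) For every $b\in\Lambda^2_0E$, the tensor $R=\vartheta(b\otimes g)+12\,\psi(b\otimes g)$ lies in $\mathcal R$, satisfies $L(R)=6R$ and $L_\sigma(R)=0$, and $\mathrm{Ric}(R)=48(n+1)b$. (b) $\vartheta(g\otimes g)+12\psi(g\otimes g)$ is a nonzero multiple of $\pi_2+6\pi_1$, and $\mathrm{Ric}(\pi_2+6\pi_1)=12(2n+1)g$. (c) If $R\in\mathcal R$ satisfies $L(R)=6R$ and $L_\sigma(R)=0$, then $\mathrm{Ric}(R)=\mathrm{Ric}^q(R)$ and $A\,\mathrm{Ric}(R)=\mathrm{Ric}(R)$ for $A=I,J,K$ (i.e. $\mathrm{Ric}(R)\in\mathbb Rg+\Lambda^2_0E$).
   Context: $\mathcal V$ is a real $4n$-dimensional vector space with inner product $g=\langle\cdot,\cdot\rangle$ and endomorphisms $I,J,K$ with $I^2=J^2=-1$, $K=IJ=-JI$, $\langle Ax,Ay\rangle=\langle x,y\rangle$; $\omega_A(x,y)=\langle x,Ay\rangle$; $\{e_i\}$ orthonormal basis, summation convention. $\mathcal R$: algebraic curvature tensors (4-linear $R$ with $R(x,y,z,u)=-R(y,x,z,u)=-R(x,y,u,z)=R(z,u,x,y)$ and first Bianchi identity). $\mathrm{Ric}(R)(x,y)=R(x,e_i,y,e_i)$, $\mathrm{Ric}^q(R)(x,y)=\sum_AR(x,e_i,Ay,Ae_i)$. For an $s$-linear form $b$: $(A_{(i)}b)(X_1,..,X_s)=-b(X_1,..,AX_i,..,X_s)$ and $(Ab)(X_1,..,X_s)=(-1)^sb(AX_1,..,AX_s)$.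 $L$ and $L_\sigma$: $L(R)=\sum_A\sum_{i<j}A_{(i)}A_{(j)}R$, $L_\sigma(R)=\sum_A(A_{(1)}A_{(2)}+A_{(2)}A_{(3)}\sigma+A_{(1)}A_{(3)}\sigma^2+A_{(3)}A_{(4)}+A_{(1)}A_{(4)}\sigma+A_{(2)}A_{(4)}\sigma^2)R$ with $\sigma R(x,y,z,u)=R(z,x,y,u)$, words applied right to left. For bilinear forms $b,c$: $(b\otimes c)(x,y,z,u)=b(x,y)c(z,u)$, $b\odot c=\tfrac12(b\otimes c+c\otimes b)$, and $(b\wedge c)(x,y,z,u)=b(x,y)c(z,u)+b(z,u)c(x,y)-b(x,z)c(y,u)-b(y,u)c(x,z)+b(x,u)c(y,z)+b(y,z)c(x,u)$. For symmetric $b,c$: $\psi(b\otimes c)(x,y,z,u)=b(x,z)c(y,u)-b(x,u)c(y,z)+c(x,z)b(y,u)-c(x,u)b(y,z)$ and $\vartheta(b\otimes c)=\sum_A\big(6(A_{(1)}-A_{(2)})b\odot(A_{(1)}-A_{(2)})c-(A_{(1)}-A_{(2)})b\wedge(A_{(1)}-A_{(2)})c\big)$. $\pi_1(x,y,z,u)=\langle x,z\rangle\langle y,u\rangle-\langle x,u\rangle\langle y,z\rangle$, $\pi_2=\sum_A(6\omega_A\odot\omega_A-\omega_A\wedge\omega_A)$. $\Lambda^2_0E$ denotes the space of symmetric trace-free bilinear forms $b$ on $\mathcal V$ with $b(Ax,Ay)=b(x,y)$ for $A=I,J,K$. *)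

theory Defs
  imports "HOL-Analysis.Analysis"
begin

type_synonym 'v form2 = "'v \<Rightarrow> 'v \<Rightarrow> real"
type_synonym 'v form4 = "'v \<Rightarrow> 'v \<Rightarrow> 'v \<Rightarrow> 'v \<Rightarrow> real"

definition quaternionic :: "('v::euclidean_space \<Rightarrow> 'v) \<Rightarrow> ('v \<Rightarrow> 'v) \<Rightarrow> ('v \<Rightarrow> 'v) \<Rightarrow> bool" where
  "quaternionic I J K \<longleftrightarrow> linear I \<and> linear J \<and> linear K \<and>
     (\<forall>x. I (I x) = - x) \<and> (\<forall>x. J (J x) = - x) \<and>
     (\<forall>x. K x = I (J x)) \<and> (\<forall>x. K x = - J (I x)) \<and>
     (\<forall>A\<in>{I, J, K}. \<forall>x y. inner (A x) (A y) = inner x y)"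

definition bilin :: "'v::euclidean_space form2 \<Rightarrow> bool" where
  "bilin b \<longleftrightarrow> (\<forall>x. linear (b x)) \<and> (\<forall>y. linear (\<lambda>x. b x y))"

definition multilin4 :: "'v::euclidean_space form4 \<Rightarrow> bool" where
  "multilin4 R \<longleftrightarrow> (\<forall>y z u. linear (\<lambda>x. R x y z u)) \<and> (\<forall>x z u. linear (\<lambda>y. R x y z u)) \<and>
     (\<forall>x y u. linear (\<lambda>z. R x y z u)) \<and> (\<forall>x y z. linear (\<lambda>u. R x y z u))"

definition curv_tensors :: "'v::euclidean_space form4 set" where
  "curv_tensors = {R. multilin4 R \<and>
     (\<forall>x y z u. R x y z u = - R y x z u \<and> R x y z u = - R x y u z \<and> R x y z u = R z u x y \<and>
        R x y z u + R y z x u + R z x y u = 0)}"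

definition sumA :: "('v \<Rightarrow> 'v) \<Rightarrow> ('v \<Rightarrow> 'v) \<Rightarrow> ('v \<Rightarrow> 'v) \<Rightarrow> (('v \<Rightarrow> 'v) \<Rightarrow> real) \<Rightarrow> real" where
  "sumA I J K F = F I + F J + F K"

definition Ric :: "'v::euclidean_space form4 \<Rightarrow> 'v form2" where
  "Ric R = (\<lambda>x y. \<Sum>e\<in>Basis. R x e y e)"

definition RicQ :: "('v::euclidean_space \<Rightarrow> 'v) \<Rightarrow> ('v \<Rightarrow> 'v) \<Rightarrow> ('v \<Rightarrow> 'v) \<Rightarrow> 'v form4 \<Rightarrow> 'v form2" where
  "RicQ I J K R = (\<lambda>x y. sumA I J K (\<lambda>A. \<Sum>e\<in>Basis. R x e (A y) (A e)))"

definition act4 :: "('v \<Rightarrow> 'v) \<Rightarrow> nat \<Rightarrow> 'v form4 \<Rightarrow> 'v form4" where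
  "act4 A i R = (\<lambda>x y z u. - R (if i = 1 then A x else x) (if i = 2 then A y else y)
                              (if i = 3 then A z else z) (if i = 4 then A u else u))"

definition act2 :: "('v \<Rightarrow> 'v) \<Rightarrow> nat \<Rightarrow> 'v form2 \<Rightarrow> 'v form2" where
  "act2 A i b = (\<lambda>x y. - b (if i = 1 then A x else x) (if i = 2 then A y else y))"

definition actfull2 :: "('v \<Rightarrow> 'v) \<Rightarrow> 'v form2 \<Rightarrow> 'v form2" where
  "actfull2 A b = (\<lambda>x y. (-1) ^ 2 * b (A x) (A y))"

definition Lop :: "('v \<Rightarrow> 'v) \<Rightarrow> ('v \<Rightarrow> 'v) \<Rightarrow> ('v \<Rightarrow> 'v) \<Rightarrow> 'v form4 \<Rightarrow> 'v form4" where
  "Lop I J K R = (\<lambda>x y z u. sumA I J K (\<lambda>A.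
      \<Sum>i\<in>{1..4::nat}. \<Sum>j\<in>{i<..4}. act4 A i (act4 A j R) x y z u))"

definition sigma :: "'v form4 \<Rightarrow> 'v form4" where
  "sigma R = (\<lambda>x y z u. R z x y u)"

definition Lsig :: "('v \<Rightarrow> 'v) \<Rightarrow> ('v \<Rightarrow> 'v) \<Rightarrow> ('v \<Rightarrow> 'v) \<Rightarrow> 'v form4 \<Rightarrow> 'v form4" where
  "Lsig I J K R = (\<lambda>x y z u. sumA I J K (\<lambda>A.
       act4 A 1 (act4 A 2 R) x y z u
     + act4 A 2 (act4 A 3 (sigma R)) x y z u
     + act4 A 1 (act4 A 3 (sigma (sigma R))) x y z u
     + act4 A 3 (act4 A 4 R) x y z u
     + act4 A 1 (act4 A 4 (sigma R)) x y z u
     + act4 A 2 (act4 A 4 (sigma (sigma R))) x y z u))"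

definition tens :: "'v form2 \<Rightarrow> 'v form2 \<Rightarrow> 'v form4" where
  "tens b c = (\<lambda>x y z u. b x y * c z u)"

definition symprod :: "'v form2 \<Rightarrow> 'v form2 \<Rightarrow> 'v form4" where
  "symprod b c = (\<lambda>x y z u. (1/2) * (tens b c x y z u + tens c b x y z u))"

definition wedge :: "'v form2 \<Rightarrow> 'v form2 \<Rightarrow> 'v form4" where
  "wedge b c = (\<lambda>x y z u. b x y * c z u + b z u * c x y - b x z * c y u - b y u * c x z
                          + b x u * c y z + b y z * c x u)"

text \<open>psi(b \<otimes> c) for symmetric b, c.\<close>
definition psi :: "'v form2 \<Rightarrow> 'v form2 \<Rightarrow> 'v form4" where
  "psi b c = (\<lambda>x y z u. b x z * c y u - b x u * c y z + c x z * b y u - c x u * b y z)"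

definition Dop :: "('v \<Rightarrow> 'v) \<Rightarrow> 'v form2 \<Rightarrow> 'v form2" where
  "Dop A b = (\<lambda>x y. act2 A 1 b x y - act2 A 2 b x y)"

definition theta :: "('v \<Rightarrow> 'v) \<Rightarrow> ('v \<Rightarrow> 'v) \<Rightarrow> ('v \<Rightarrow> 'v) \<Rightarrow> 'v form2 \<Rightarrow> 'v form2 \<Rightarrow> 'v form4" where
  "theta I J K b c = (\<lambda>x y z u. sumA I J K (\<lambda>A.
      6 * symprod (Dop A b) (Dop A c) x y z u - wedge (Dop A b) (Dop A c) x y z u))"

definition omega :: "('v::real_inner \<Rightarrow> 'v) \<Rightarrow> 'v form2" where
  "omega A = (\<lambda>x y. inner x (A y))"

definition pi1 :: "'v::real_inner form4" where
  "pi1 = (\<lambda>x y z u. inner x z * inner y u - inner x u * inner y z)"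

definition pi2 :: "('v::real_inner \<Rightarrow> 'v) \<Rightarrow> ('v \<Rightarrow> 'v) \<Rightarrow> ('v \<Rightarrow> 'v) \<Rightarrow> 'v form4" where
  "pi2 I J K = (\<lambda>x y z u. sumA I J K (\<lambda>A.
      6 * symprod (omega A) (omega A) x y z u - wedge (omega A) (omega A) x y z u))"

definition Lambda20 :: "('v::euclidean_space \<Rightarrow> 'v) \<Rightarrow> ('v \<Rightarrow> 'v) \<Rightarrow> ('v \<Rightarrow> 'v) \<Rightarrow> 'v form2 set" where
  "Lambda20 I J K = {b. bilin b \<and> (\<forall>x y. b x y = b y x) \<and> (\<Sum>e\<in>Basis. b e e) = 0 \<and>
      (\<forall>A\<in>{I, J, K}. \<forall>x y. b (A x) (A y) = b x y)}"

end

theory Submission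
  imports Defs
begin


lemma lin_mult_r: "linear f \<Longrightarrow> linear (\<lambda>x. f x * (k::real))"
  by (rule linearI) (auto simp: real_vector.linear_add linear_cmul algebra_simps)
lemma lin_mult_l: "linear f \<Longrightarrow> linear (\<lambda>x. (k::real) * f x)"
  by (rule linearI) (auto simp: real_vector.linear_add linear_cmul algebra_simps)

lemma lin_contract:
  fixes f :: "'v::euclidean_space \<Rightarrow> real"
  assumes "linear f"
  shows "(\<Sum>e\<in>Basis. f e * inner e w) = f w"
proof -
  have "f w = f (\<Sum>e\<in>Basis. inner w e *\<^sub>R e)" by (simp add: euclidean_representation)
  also have "\<dots> = (\<Sum>e\<in>Basis. inner w e * f e)"
    by (simp add: real_vector.linear_sum[OF assms] linear_cmul[OF assms])
  finally show ?thesis by (simp add: inner_commute mult.commute)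
qed

lemma bilinD1: "bilin F \<Longrightarrow> linear (F p)" and bilinD2: "bilin F \<Longrightarrow> linear (\<lambda>x. F x q)"
  by (auto simp: bilin_def)

lemma bilin_prod: "linear f \<Longrightarrow> linear g \<Longrightarrow> bilin (\<lambda>p q. f p * (g q :: real))"
  unfolding bilin_def by (auto intro: lin_mult_r lin_mult_l)

lemma bilin_sum: "(\<And>i. i \<in> S \<Longrightarrow> bilin (F i)) \<Longrightarrow> bilin (\<lambda>p q. \<Sum>i\<in>S. F i p q)"
  unfolding bilin_def by (auto intro!: linear_compose_sum)

definition cx :: "('v::euclidean_space \<Rightarrow> 'v) \<Rightarrow> bool" where
  "cx A \<longleftrightarrow> linear A \<and> (\<forall>x. A (A x) = - x) \<and> (\<forall>x y. inner (A x) y = - inner x (A y))"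

lemma skew_sum:
  fixes A :: "'v::euclidean_space \<Rightarrow> 'v"
  assumes "cx A" "bilin F"
  shows "(\<Sum>a\<in>Basis. F (A a) a) = - (\<Sum>a\<in>Basis. F a (A a))"
proof -
  have sk: "inner b (A a) = - inner a (A b)" for a b
    using assms(1) unfolding cx_def by (metis inner_commute)
  have "(\<Sum>a\<in>Basis. F (A a) a) = (\<Sum>a\<in>Basis. \<Sum>b\<in>Basis. F b a * inner b (A a))"
    using lin_contract[OF bilinD2[OF assms(2)]] by simp
  also have "\<dots> = (\<Sum>b\<in>Basis. \<Sum>a\<in>Basis. F b a * inner b (A a))"
    by (rule sum.swap)
  also have "\<dots> = (\<Sum>b\<in>Basis. - (\<Sum>a\<in>Basis. F b a * inner a (A b)))"
  proof (rule sum.cong[OF refl])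
    fix b show "(\<Sum>a\<in>Basis. F b a * inner b (A a)) = - (\<Sum>a\<in>Basis. F b a * inner a (A b))"
      by (simp add: sk[where b=b] sum_negf)
  qed
  also have "\<dots> = - (\<Sum>b\<in>Basis. F b (A b))"
    using lin_contract[OF bilinD1[OF assms(2)]] by (simp add: sum_negf)
  finally show ?thesis .
qed

lemma double_sum:
  fixes A :: "'v::euclidean_space \<Rightarrow> 'v"
  assumes "cx A" "bilin F"
  shows "(\<Sum>a\<in>Basis. F (A a) (A a)) = (\<Sum>a\<in>Basis. F a a)"
proof -
  have lA: "linear A" and AA: "\<And>x. A (A x) = - x" using assms(1) by (auto simp: cx_def)
  have bl: "bilin (\<lambda>p q. F p (A q))"
    using assms(2) lA unfolding bilin_def by (auto intro: linear_compose[unfolded o_def])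
  have "(\<Sum>a\<in>Basis. F (A a) (A a)) = - (\<Sum>a\<in>Basis. F a (A (A a)))"
    using skew_sum[OF assms(1) bl] by simp
  also have "\<dots> = (\<Sum>a\<in>Basis. F a a)"
    using bilinD1[OF assms(2)] by (simp add: AA real_vector.linear_neg sum_negf)
  finally show ?thesis .
qed




lemma mlD: assumes "multilin4 S" shows "linear (\<lambda>x. S x y z u)" "linear (\<lambda>y. S x y z u)"
  "linear (\<lambda>z. S x y z u)" "linear (\<lambda>u. S x y z u)"
  using assms by (auto simp: multilin4_def)

lemma ml_rules: assumes "multilin4 S" shows
  "S (x1 + x2) y z u = S x1 y z u + S x2 y z u" "S x (y1 + y2) z u = S x y1 z u + S x y2 z u"
  "S x y (z1 + z2) u = S x y z1 u + S x y z2 u" "S x y z (u1 + u2) = S x y z u1 + S x y z u2"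
  "S (c *\<^sub>R x) y z u = c * S x y z u" "S x (c *\<^sub>R y) z u = c * S x y z u"
  "S x y (c *\<^sub>R z) u = c * S x y z u" "S x y z (c *\<^sub>R u) = c * S x y z u"
  "S (- x) y z u = - S x y z u" "S x (- y) z u = - S x y z u"
  "S x y (- z) u = - S x y z u" "S x y z (- u) = - S x y z u"
  using real_vector.linear_add[OF mlD(1)[OF assms, of y z u]] real_vector.linear_add[OF mlD(2)[OF assms, of x z u]]
    real_vector.linear_add[OF mlD(3)[OF assms, of x y u]] real_vector.linear_add[OF mlD(4)[OF assms, of x y z]]
    linear_cmul[OF mlD(1)[OF assms, of y z u]] linear_cmul[OF mlD(2)[OF assms, of x z u]]
    linear_cmul[OF mlD(3)[OF assms, of x y u]] linear_cmul[OF mlD(4)[OF assms, of x y z]]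
    real_vector.linear_neg[OF mlD(1)[OF assms, of y z u]] real_vector.linear_neg[OF mlD(2)[OF assms, of x z u]]
    real_vector.linear_neg[OF mlD(3)[OF assms, of x y u]] real_vector.linear_neg[OF mlD(4)[OF assms, of x y z]]
  by auto

lemma cxD: assumes "cx A" shows "linear A" "A (A x) = - x" "inner (A x) y = - inner x (A y)"
  "A (x + y) = A x + A y" "A (c *\<^sub>R x) = c *\<^sub>R A x" "A (- x) = - A x"
  using assms by (auto simp: cx_def real_vector.linear_add linear_cmul real_vector.linear_neg)

lemma ml_act: assumes "multilin4 S" "cx A" shows "multilin4 (act4 A i S)"
  unfolding multilin4_def act4_def
  by (intro conjI allI linearI) (simp_all add: ml_rules[OF assms(1)] cxD[OF assms(2)])

lemma ml_add4: assumes "multilin4 S1" "multilin4 S2" "multilin4 S3" "multilin4 S4"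
  shows "multilin4 (\<lambda>x y z u. S1 x y z u + S2 x y z u + S3 x y z u + S4 x y z u)"
  unfolding multilin4_def
  by (intro conjI allI linearI) (simp_all add: ml_rules[OF assms(1)] ml_rules[OF assms(2)]
      ml_rules[OF assms(3)] ml_rules[OF assms(4)] algebra_simps)

definition tip :: "'v::euclidean_space form4 \<Rightarrow> 'v form4 \<Rightarrow> real" where
  "tip S T = (\<Sum>a\<in>Basis. \<Sum>b\<in>Basis. \<Sum>c\<in>Basis. \<Sum>d\<in>Basis. S a b c d * T a b c d)"

lemma bl_of: assumes "\<And>q. linear (\<lambda>p. F p q)" "\<And>p. linear (\<lambda>q. F p q)" shows "bilin F"
  using assms unfolding bilin_def by auto

lemma tip_sk1: assumes "cx A" "multilin4 S" "multilin4 T"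
  shows "tip (act4 A 1 S) T = - tip S (act4 A 1 T)"
proof -
  define F where "F = (\<lambda>p q. \<Sum>b\<in>Basis. \<Sum>c\<in>Basis. \<Sum>d\<in>Basis. S p b c d * T q b c d)"
  have bF: "bilin F" unfolding F_def
    by (intro bilin_sum bilin_prod mlD assms)
  have "tip (act4 A 1 S) T = - (\<Sum>a\<in>Basis. F (A a) a)"
    by (simp add: tip_def act4_def F_def sum_negf)
  also have "\<dots> = (\<Sum>a\<in>Basis. F a (A a))" using skew_sum[OF assms(1) bF] by simp
  also have "\<dots> = - tip S (act4 A 1 T)"
    by (simp add: tip_def act4_def F_def sum_negf)
  finally show ?thesis .
qed

lemma tip_sk2: assumes "cx A" "multilin4 S" "multilin4 T"
  shows "tip (act4 A 2 S) T = - tip S (act4 A 2 T)"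
proof -
  define F where "F = (\<lambda>a p q. \<Sum>c\<in>Basis. \<Sum>d\<in>Basis. S a p c d * T a q c d)"
  have bF: "bilin (F a)" for a unfolding F_def
    by (intro bilin_sum bilin_prod mlD assms)
  have "tip (act4 A 2 S) T = - (\<Sum>a\<in>Basis. \<Sum>b\<in>Basis. F a (A b) b)"
    by (simp add: tip_def act4_def F_def sum_negf)
  also have "\<dots> = (\<Sum>a\<in>Basis. \<Sum>b\<in>Basis. F a b (A b))" using skew_sum[OF assms(1) bF] by (simp add: sum_negf)
  also have "\<dots> = - tip S (act4 A 2 T)"
    by (simp add: tip_def act4_def F_def sum_negf)
  finally show ?thesis .
qed

lemma tip_sk3: assumes "cx A" "multilin4 S" "multilin4 T"
  shows "tip (act4 A 3 S) T = - tip S (act4 A 3 T)"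
proof -
  define F where "F = (\<lambda>a b p q. \<Sum>d\<in>Basis. S a b p d * T a b q d)"
  have bF: "bilin (F a b)" for a b unfolding F_def
    by (intro bilin_sum bilin_prod mlD assms)
  have "tip (act4 A 3 S) T = - (\<Sum>a\<in>Basis. \<Sum>b\<in>Basis. \<Sum>c\<in>Basis. F a b (A c) c)"
    by (simp add: tip_def act4_def F_def sum_negf)
  also have "\<dots> = (\<Sum>a\<in>Basis. \<Sum>b\<in>Basis. \<Sum>c\<in>Basis. F a b c (A c))" using skew_sum[OF assms(1) bF] by (simp add: sum_negf)
  also have "\<dots> = - tip S (act4 A 3 T)"
    by (simp add: tip_def act4_def F_def sum_negf)
  finally show ?thesis .
qed

lemma tip_sk4: assumes "cx A" "multilin4 S" "multilin4 T"
  shows "tip (act4 A 4 S) T = - tip S (act4 A 4 T)"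
proof -
  define F where "F = (\<lambda>a b c p q. S a b c p * T a b c q)"
  have bF: "bilin (F a b c)" for a b c unfolding F_def
    by (intro bilin_prod mlD assms)
  have "tip (act4 A 4 S) T = - (\<Sum>a\<in>Basis. \<Sum>b\<in>Basis. \<Sum>c\<in>Basis. \<Sum>d\<in>Basis. F a b c (A d) d)"
    by (simp add: tip_def act4_def F_def sum_negf)
  also have "\<dots> = (\<Sum>a\<in>Basis. \<Sum>b\<in>Basis. \<Sum>c\<in>Basis. \<Sum>d\<in>Basis. F a b c d (A d))" using skew_sum[OF assms(1) bF] by (simp add: sum_negf)
  also have "\<dots> = - tip S (act4 A 4 T)"
    by (simp add: tip_def act4_def F_def sum_negf)
  finally show ?thesis .
qed


lemma sum4: "(\<Sum>i\<in>{1..4::nat}. \<Sum>j\<in>{i<..4}. f i j) = f 1 2 + f 1 3 + f 1 4 + f 2 3 + f 2 4 + (f 3 4 :: real)"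
proof -
  have a: "{1..4::nat} = {1,2,3,4}" by auto
  have b: "{1<..4::nat} = {2,3,4}" "{2<..4::nat} = {3,4}" "{3<..4::nat} = {4}" "{4<..4::nat} = {}" "{Suc 0<..4::nat} = {2,3,4}" by auto
  show ?thesis unfolding a by (simp add: b)
qed

definition Dt :: "('v \<Rightarrow> 'v) \<Rightarrow> 'v form4 \<Rightarrow> 'v form4" where
  "Dt A S = (\<lambda>x y z u. act4 A 1 S x y z u + act4 A 2 S x y z u + act4 A 3 S x y z u + act4 A 4 S x y z u)"

definition MM :: "('v \<Rightarrow> 'v) \<Rightarrow> 'v form4 \<Rightarrow> 'v form4" where
  "MM A S = (\<lambda>x y z u. act4 A 1 (act4 A 2 S) x y z u + act4 A 1 (act4 A 3 S) x y z u + act4 A 1 (act4 A 4 S) x y z u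
     + act4 A 2 (act4 A 3 S) x y z u + act4 A 2 (act4 A 4 S) x y z u + act4 A 3 (act4 A 4 S) x y z u)"

lemma Lop_MM: "Lop I J K S x y z u = MM I S x y z u + MM J S x y z u + MM K S x y z u"
  unfolding Lop_def sumA_def sum4 MM_def by simp

lemma ml_Dt: "cx A \<Longrightarrow> multilin4 S \<Longrightarrow> multilin4 (Dt A S)"
  unfolding Dt_def by (intro ml_add4 ml_act)

lemma tip_add_l: "tip (\<lambda>x y z u. S1 x y z u + S2 x y z u + S3 x y z u + S4 x y z u) T = tip S1 T + tip S2 T + tip S3 T + tip S4 T"
  by (simp add: tip_def distrib_right sum.distrib)
lemma tip_add_r: "tip T (\<lambda>x y z u. S1 x y z u + S2 x y z u + S3 x y z u + S4 x y z u) = tip T S1 + tip T S2 + tip T S3 + tip T S4"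
  by (simp add: tip_def distrib_left sum.distrib)
lemma tip_add_r3: "tip T (\<lambda>x y z u. S1 x y z u + S2 x y z u + S3 x y z u) = tip T S1 + tip T S2 + tip T S3"
  by (simp add: tip_def distrib_left sum.distrib)

lemma DtDt: assumes "cx A" "multilin4 S"
  shows "Dt A (Dt A S) x y z u = -4 * S x y z u + 2 * MM A S x y z u"
  unfolding Dt_def MM_def act4_def by (simp add: ml_rules[OF assms(2)] cxD[OF assms(1)])

lemma tip_DD: assumes "cx A" "multilin4 S"
  shows "tip (Dt A S) (Dt A S) = - tip S (Dt A (Dt A S))"
proof -
  have m: "multilin4 (Dt A S)" by (rule ml_Dt[OF assms])
  have "tip (Dt A S) (Dt A S) = tip (act4 A 1 S) (Dt A S) + tip (act4 A 2 S) (Dt A S) + tip (act4 A 3 S) (Dt A S) + tip (act4 A 4 S) (Dt A S)"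
    by (subst (1) Dt_def) (rule tip_add_l)
  also have "\<dots> = - (tip S (act4 A 1 (Dt A S)) + tip S (act4 A 2 (Dt A S)) + tip S (act4 A 3 (Dt A S)) + tip S (act4 A 4 (Dt A S)))"
    using tip_sk1[OF assms m] tip_sk2[OF assms m] tip_sk3[OF assms m] tip_sk4[OF assms m] by linarith
  also have "\<dots> = - tip S (Dt A (Dt A S))"
    by (subst (2) Dt_def) (simp add: tip_add_r)
  finally show ?thesis .
qed

lemma tip_nonneg: "tip S S \<ge> 0"
  unfolding tip_def by (intro sum_nonneg) simp

lemma tip_zero: assumes "tip S S = 0" "a \<in> Basis" "b \<in> Basis" "c \<in> Basis" "d \<in> Basis"
  shows "S a b c d = 0"
proof -
  have 1: "(\<Sum>b\<in>Basis. \<Sum>c\<in>Basis. \<Sum>d\<in>Basis. S a b c d * S a b c d) = 0"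
    by (rule sum_nonneg_0[OF finite_Basis _ assms(1)[unfolded tip_def] assms(2)]) (intro sum_nonneg; simp)
  have 2: "(\<Sum>c\<in>Basis. \<Sum>d\<in>Basis. S a b c d * S a b c d) = 0"
    by (rule sum_nonneg_0[OF finite_Basis _ 1 assms(3)]) (intro sum_nonneg; simp)
  have 3: "(\<Sum>d\<in>Basis. S a b c d * S a b c d) = 0"
    by (rule sum_nonneg_0[OF finite_Basis _ 2 assms(4)]) (intro sum_nonneg; simp)
  have 4: "S a b c d * S a b c d = 0"
    by (rule sum_nonneg_0[OF finite_Basis _ 3 assms(5)]) simp
  then show ?thesis by simp
qed

lemma ml_zero: assumes "multilin4 S" "\<And>a b c d. a \<in> Basis \<Longrightarrow> b \<in> Basis \<Longrightarrow> c \<in> Basis \<Longrightarrow> d \<in> Basis \<Longrightarrow> S a b c d = 0"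
  shows "S x y z u = 0"
proof -
  have 1: "S a b c u = 0" if "a \<in> Basis" "b \<in> Basis" "c \<in> Basis" for a b c u
  proof -
    have "S a b c u = (\<Sum>d\<in>Basis. S a b c d * inner d u)" using lin_contract[OF mlD(4)[OF assms(1)]] by simp
    then show ?thesis using assms(2) that by simp
  qed
  have 2: "S a b z u = 0" if "a \<in> Basis" "b \<in> Basis" for a b z u
  proof -
    have "S a b z u = (\<Sum>c\<in>Basis. S a b c u * inner c z)" using lin_contract[OF mlD(3)[OF assms(1)]] by simp
    then show ?thesis using 1 that by simp
  qed
  have 3: "S a y z u = 0" if "a \<in> Basis" for a y z u
  proof -
    have "S a y z u = (\<Sum>b\<in>Basis. S a b z u * inner b y)" using lin_contract[OF mlD(2)[OF assms(1)]] by simp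
    then show ?thesis using 2 that by simp
  qed
  have "S x y z u = (\<Sum>a\<in>Basis. S a y z u * inner a x)" using lin_contract[OF mlD(1)[OF assms(1)]] by simp
  then show ?thesis using 3 by simp
qed

lemma tip_zero_fun: "tip S (\<lambda>x y z u. 0) = 0" by (simp add: tip_def)

lemma inv_from_L:
  assumes cI: "cx I" and cJ: "cx J" and cK: "cx K" and m: "multilin4 R"
    and L: "Lop I J K R = (\<lambda>x y z u. 6 * R x y z u)"
  shows "A \<in> {I,J,K} \<Longrightarrow> Dt A R x y z u = 0"
proof -
  have pw: "Dt I (Dt I R) x y z u + Dt J (Dt J R) x y z u + Dt K (Dt K R) x y z u = 0" for x y z u
  proof -
    have "Lop I J K R x y z u = 6 * R x y z u" using L by meson
    then show ?thesis unfolding DtDt[OF cI m] DtDt[OF cJ m] DtDt[OF cK m] Lop_MM by simp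
  qed
  have "tip R (\<lambda>x y z u. Dt I (Dt I R) x y z u + Dt J (Dt J R) x y z u + Dt K (Dt K R) x y z u) = 0"
    by (simp only: pw tip_zero_fun)
  then have "tip R (Dt I (Dt I R)) + tip R (Dt J (Dt J R)) + tip R (Dt K (Dt K R)) = 0"
    by (simp only: tip_add_r3)
  then have s: "tip (Dt I R) (Dt I R) + tip (Dt J R) (Dt J R) + tip (Dt K R) (Dt K R) = 0"
    by (simp add: tip_DD[OF cI m] tip_DD[OF cJ m] tip_DD[OF cK m])
  have z: "tip (Dt I R) (Dt I R) = 0" "tip (Dt J R) (Dt J R) = 0" "tip (Dt K R) (Dt K R) = 0"
    using s tip_nonneg[of "Dt I R"] tip_nonneg[of "Dt J R"] tip_nonneg[of "Dt K R"] by linarith+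
  assume A: "A \<in> {I,J,K}"
  then have zA: "tip (Dt A R) (Dt A R) = 0" and cA: "cx A" using z cI cJ cK by auto
  show "Dt A R x y z u = 0"
    by (rule ml_zero[OF ml_Dt[OF cA m]]) (rule tip_zero[OF zA])
qed


definition PP :: "('v \<Rightarrow> 'v) \<Rightarrow> 'v::euclidean_space form4 \<Rightarrow> 'v form2" where
  "PP A R = (\<lambda>x y. \<Sum>e\<in>Basis. R x e y (A e))"

locale cR =
  fixes R :: "'v::euclidean_space form4"
  assumes Rc: "R \<in> curv_tensors"
begin

lemma ml: "multilin4 R" using Rc unfolding curv_tensors_def mem_Collect_eq by blast
lemma cs1: "R x y z u = - R y x z u" and cs2: "R x y z u = - R x y u z" and cs3: "R x y z u = R z u x y"
  and cb: "R x y z u + R y z x u + R z x y u = 0"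
  using Rc unfolding curv_tensors_def mem_Collect_eq by blast+

lemma bl24: "bilin (\<lambda>s t. R p s q t)" by (rule bl_of; rule mlD[OF ml])
lemma bl34: "bilin (\<lambda>s t. R p q s t)" by (rule bl_of; rule mlD[OF ml])
lemma bl14: "bilin (\<lambda>s t. R s p q t)" by (rule bl_of; rule mlD[OF ml])

lemma F1: "cx A \<Longrightarrow> (\<Sum>e\<in>Basis. R p (A e) q e) = - PP A R p q"
  using skew_sum[OF _ bl24, of A p q] by (simp add: PP_def)
lemma F2: "cx A \<Longrightarrow> (\<Sum>e\<in>Basis. R p (A e) q (A e)) = Ric R p q"
  using double_sum[OF _ bl24, of A p q] by (simp add: Ric_def)
lemma F3: "cx A \<Longrightarrow> PP A R y x = - PP A R x y"
proof -
  assume c: "cx A"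
  have "PP A R y x = (\<Sum>e\<in>Basis. R x (A e) y e)" unfolding PP_def by (simp add: cs3[of y])
  then show ?thesis using F1[OF c] by simp
qed
lemma RicS: "Ric R y x = Ric R x y" unfolding Ric_def by (simp add: cs3[of y])
lemma Ricneg: "Ric R x (- y) = - Ric R x y" unfolding Ric_def by (simp add: ml_rules[OF ml] sum_negf)

context
  fixes A assumes c: "cx A" and inv: "\<And>x y z u. Dt A R x y z u = 0"
begin

lemma F4: "Ric R (A x) y = - Ric R x (A y)"
proof -
  have "R (A x) e y e + R x (A e) y e + R x e (A y) e + R x e y (A e) = 0" for e
    using inv[of x e y e] by (simp add: Dt_def act4_def; linarith)
  then have "(\<Sum>e\<in>Basis. R (A x) e y e + R x (A e) y e + R x e (A y) e + R x e y (A e)) = 0"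
    by simp
  then have "Ric R (A x) y + (\<Sum>e\<in>Basis. R x (A e) y e) + Ric R x (A y) + PP A R x y = 0"
    by (simp add: sum.distrib Ric_def PP_def)
  then show ?thesis using F1[OF c] by simp
qed

lemma F5: "PP A R (A x) y = - PP A R x (A y)"
proof -
  have "R (A x) e y (A e) + R x (A e) y (A e) + R x e (A y) (A e) + R x e y (A (A e)) = 0" for e
    using inv[of x e y "A e"] by (simp add: Dt_def act4_def; linarith)
  then have "(\<Sum>e\<in>Basis. R (A x) e y (A e) + R x (A e) y (A e) + R x e (A y) (A e) + R x e y (A (A e))) = 0"
    by simp
  then have "PP A R (A x) y + (\<Sum>e\<in>Basis. R x (A e) y (A e)) + PP A R x (A y) - Ric R x y = 0"
    by (simp add: sum.distrib Ric_def PP_def cxD[OF c] ml_rules[OF ml] sum_negf sum_subtractf)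
  then show ?thesis using F2[OF c] by simp
qed

lemma RicAA: "Ric R (A x) (A y) = Ric R x y"
  using F4[of x "A y"] by (simp add: cxD[OF c] Ricneg)

lemma LS: "(\<Sum>e\<in>Basis. act4 A 1 (act4 A 2 R) x e y e
     + act4 A 2 (act4 A 3 (sigma R)) x e y e
     + act4 A 1 (act4 A 3 (sigma (sigma R))) x e y e
     + act4 A 3 (act4 A 4 R) x e y e
     + act4 A 1 (act4 A 4 (sigma R)) x e y e
     + act4 A 2 (act4 A 4 (sigma (sigma R))) x e y e) = 6 * PP A R x (A y) - 2 * Ric R x y"
proof -
  have s0: "(\<Sum>e\<in>Basis. act4 A 1 (act4 A 2 R) x e y e
     + act4 A 2 (act4 A 3 (sigma R)) x e y e
     + act4 A 1 (act4 A 3 (sigma (sigma R))) x e y e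
     + act4 A 3 (act4 A 4 R) x e y e
     + act4 A 1 (act4 A 4 (sigma R)) x e y e
     + act4 A 2 (act4 A 4 (sigma (sigma R))) x e y e) =
     (\<Sum>e\<in>Basis. R (A x) (A e) y e) + (\<Sum>e\<in>Basis. R (A y) x (A e) e) + (\<Sum>e\<in>Basis. R e (A y) (A x) e)
     + (\<Sum>e\<in>Basis. R x e (A y) (A e)) + (\<Sum>e\<in>Basis. R y (A x) e (A e)) + (\<Sum>e\<in>Basis. R (A e) y x (A e))"
    by (simp add: act4_def Defs.sigma_def sum.distrib)
  have s1: "(\<Sum>e\<in>Basis. R (A x) (A e) y e) = - PP A R (A x) y" by (rule F1[OF c])
  have s2: "(\<Sum>e\<in>Basis. R (A y) x (A e) e) = PP A R x (A y) - PP A R (A y) x"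
  proof -
    have "(\<Sum>e\<in>Basis. R (A y) x (A e) e) = - (\<Sum>e\<in>Basis. R (A y) x e (A e))"
      using skew_sum[OF c bl34, of "A y" x] by simp
    also have "\<dots> = - (\<Sum>e\<in>Basis. - R x e (A y) (A e) + R (A y) e x (A e))"
    proof -
      have "R (A y) x e (A e) = - R x e (A y) (A e) + R (A y) e x (A e)" for e
        using cb[of "A y" x e "A e"] cs1[of e "A y"] by simp
      then show ?thesis by simp
    qed
    also have "\<dots> = PP A R x (A y) - PP A R (A y) x"
      by (simp add: PP_def sum.distrib sum_negf sum_subtractf)
    finally show ?thesis .
  qed
  have s3: "(\<Sum>e\<in>Basis. R e (A y) (A x) e) = - Ric R (A x) (A y)"
  proof -
    have "R e (A y) (A x) e = - R (A x) e (A y) e" for e using cs3[of e] cs2[of "A x" e e] by simp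
    then show ?thesis by (simp add: Ric_def sum_negf)
  qed
  have s4: "(\<Sum>e\<in>Basis. R x e (A y) (A e)) = PP A R x (A y)" by (simp add: PP_def)
  have s5: "(\<Sum>e\<in>Basis. R y (A x) e (A e)) = - PP A R (A x) y + PP A R y (A x)"
  proof -
    have "R y (A x) e (A e) = - R (A x) e y (A e) + R y e (A x) (A e)" for e
      using cb[of y "A x" e "A e"] cs1[of e y] by simp
    then show ?thesis by (simp add: PP_def sum.distrib sum_negf sum_subtractf)
  qed
  have s6: "(\<Sum>e\<in>Basis. R (A e) y x (A e)) = - Ric R x y"
  proof -
    have "(\<Sum>e\<in>Basis. R (A e) y x (A e)) = (\<Sum>e\<in>Basis. R e y x e)"
      using double_sum[OF c bl14, of y x] by simp
    also have "\<dots> = - Ric R y x" unfolding Ric_def using cs1[of _ y] by (simp add: sum_negf)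
    finally show ?thesis by (simp add: RicS)
  qed
  show ?thesis using s0 s1 s2 s3 s4 s5 s6 F3[OF c, of "A y" x] F3[OF c, of "A x" y] F5[of x y] RicAA[of x y] by linarith
qed

end

end




locale quat =
  fixes I J K :: "'v::euclidean_space \<Rightarrow> 'v"
  assumes qu: "quaternionic I J K"
begin

lemma linI: "linear I" and linJ: "linear J" and linK: "linear K"
  using qu by (auto simp: quaternionic_def)

lemma qf: "I (I x) = - x" "J (J x) = - x" "K x = I (J x)" "K x = - J (I x)"
  using qu unfolding quaternionic_def by blast+

lemma negI[simp]: "I (- x) = - I x" and negJ[simp]: "J (- x) = - J x" and negK[simp]: "K (- x) = - K x"
  using linI linJ linK by (auto simp: real_vector.linear_neg)

lemma II[simp]: "I (I x) = - x" and JJ[simp]: "J (J x) = - x"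
  and IJ[simp]: "I (J x) = K x" using qf[of x] by auto
lemma JI[simp]: "J (I x) = - K x" using qf(4)[of x] by (metis minus_minus)
lemma KJ[simp]: "K (J x) = - I x"
  using qf(3)[of "J x"] by simp
lemma JK[simp]: "J (K x) = I x"
  using qf(4)[of "J x"] qf(3)[of "J x"] by (metis JI JJ minus_minus negI qf(3))
lemma KI[simp]: "K (I x) = J x"
  using qf(4)[of "I x"] by simp
lemma IK[simp]: "I (K x) = - J x"
  using qf(3)[of x] by (metis II)
lemma KK[simp]: "K (K x) = - x"
  using qf(3)[of "K x"] by simp

lemma orth: "A \<in> {I,J,K} \<Longrightarrow> inner (A x) (A y) = inner x y"
  using qu by (auto simp: quaternionic_def)

lemma skI[simp]: "inner (I x) y = - inner x (I y)"
  using orth[of I x "I y"] by simp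
lemma skJ[simp]: "inner (J x) y = - inner x (J y)"
  using orth[of J x "J y"] by simp
lemma skK[simp]: "inner (K x) y = - inner x (K y)"
  using orth[of K x "K y"] by simp

lemma ordI: "inner y (I x) = - inner x (I y)" by (metis inner_commute skI)
lemma ordJ: "inner y (J x) = - inner x (J y)" by (metis inner_commute skJ)
lemma ordK: "inner y (K x) = - inner x (K y)" by (metis inner_commute skK)
lemma diagI[simp]: "inner x (I x) = 0" using ordI[of x x] by simp
lemma diagJ[simp]: "inner x (J x) = 0" using ordJ[of x x] by simp
lemma diagK[simp]: "inner x (K x) = 0" using ordK[of x x] by simp

end

locale quatb = quat +
  fixes b :: "'v::euclidean_space form2"
  assumes bl: "bilin b" and bs: "b x y = b y x"
    and bI: "b (I x) (I y) = b x y" and bJ: "b (J x) (J y) = b x y" and bK: "b (K x) (K y) = b x y"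
begin

lemma bneg1[simp]: "b (- x) y = - b x y" and bneg2[simp]: "b x (- y) = - b x y"
  using bl by (auto simp: bilin_def real_vector.linear_neg[where f="\<lambda>x. b x y" for y, simplified] real_vector.linear_neg)

lemma bskI[simp]: "b (I x) y = - b x (I y)" using bI[of x "I y"] by simp
lemma bskJ[simp]: "b (J x) y = - b x (J y)" using bJ[of x "J y"] by simp
lemma bskK[simp]: "b (K x) y = - b x (K y)" using bK[of x "K y"] by simp
lemma bordI: "b y (I x) = - b x (I y)" by (metis bs bskI)
lemma bordJ: "b y (J x) = - b x (J y)" by (metis bs bskJ)
lemma bordK: "b y (K x) = - b x (K y)" by (metis bs bskK)
lemma bdiagI[simp]: "b x (I x) = 0" using bordI[of x x] by simp
lemma bdiagJ[simp]: "b x (J x) = 0" using bordJ[of x x] by simp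
lemma bdiagK[simp]: "b x (K x) = 0" using bordK[of x x] by simp

lemma DopIb: "Dop I b x y = 2 * b x (I y)" by (simp add: Dop_def act2_def)
lemma DopJb: "Dop J b x y = 2 * b x (J y)" by (simp add: Dop_def act2_def)
lemma DopKb: "Dop K b x y = 2 * b x (K y)" by (simp add: Dop_def act2_def)
lemma DopIg: "Dop I inner x y = 2 * inner x (I y)" by (simp add: Dop_def act2_def)
lemma DopJg: "Dop J inner x y = 2 * inner x (J y)" by (simp add: Dop_def act2_def)
lemma DopKg: "Dop K inner x y = 2 * inner x (K y)" by (simp add: Dop_def act2_def)

definition "RR = (\<lambda>x y z u. theta I J K b inner x y z u + 12 * psi b inner x y z u)"

lemmas ords = ordI[of _ x] ordJ[of _ x] ordK[of _ x] bordI[of _ x] bordJ[of _ x] bordK[of _ x]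
  bs[of _ x] inner_commute[of _ x] for x


end


lemma sp6: "6 * symprod f g x y z u - w = 3 * (f x y * g z u + g x y * f z u) - w"
  by (simp add: symprod_def tens_def)

context quat begin
lemma addI: "I (x + y) = I x + I y" "J (x + y) = J x + J y" "K (x + y) = K x + K y"
  using linI linJ linK by (auto simp: real_vector.linear_add)
lemma scI: "I (c *\<^sub>R x) = c *\<^sub>R I x" "J (c *\<^sub>R x) = c *\<^sub>R J x" "K (c *\<^sub>R x) = c *\<^sub>R K x"
  using linI linJ linK by (auto simp: linear_cmul)
lemma DopIg': "Dop I inner x y = 2 * inner x (I y)" "Dop J inner x y = 2 * inner x (J y)" "Dop K inner x y = 2 * inner x (K y)"
  by (simp_all add: Dop_def act2_def)

lemma partb: "theta I J K inner inner x y z u + 12 * psi inner inner x y z u = 4 * (pi2 I J K x y z u + 6 * pi1 x y z u)"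
  unfolding theta_def psi_def symprod_def tens_def wedge_def sumA_def pi2_def pi1_def omega_def
  by (simp add: DopIg' field_simps)

lemma Pipw: "pi2 I J K x e y e + 6 * pi1 x e y e =
   - 6 * (inner y (I e) * inner e (I x)) - 6 * (inner y (J e) * inner e (J x)) - 6 * (inner y (K e) * inner e (K x))
   + 6 * (inner x y * inner e e) - 6 * (inner e x * inner e y)"
  unfolding symprod_def tens_def wedge_def sumA_def pi2_def pi1_def omega_def
  by (simp add: ordI[of x e] ordJ[of x e] ordK[of x e] ordI[of e y] ordJ[of e y] ordK[of e y]
     inner_commute[of x e] inner_commute[of y e] field_simps)

lemma linir: "linear (\<lambda>e. inner y e)" by (rule bounded_linear.linear[OF bounded_linear_inner_right])
lemma linil: "linear (\<lambda>e. inner e y)" by (rule bounded_linear.linear[OF bounded_linear_inner_left])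

lemma sC: assumes "A \<in> {I,J,K}" shows "(\<Sum>e\<in>Basis. inner y (A e) * inner e (A x)) = - inner y x"
proof -
  have l: "linear A" using assms linI linJ linK by auto
  have "(\<Sum>e\<in>Basis. inner y (A e) * inner e (A x)) = inner y (A (A x))"
    by (rule lin_contract[of "\<lambda>e. inner y (A e)"]) (rule linear_compose[OF l linir, unfolded o_def])
  also have "\<dots> = - inner y x" using assms by auto
  finally show ?thesis .
qed

lemma Ric_Pi: "Ric (\<lambda>x y z u. pi2 I J K x y z u + 6 * pi1 x y z u) x y = 6 * real DIM('v) * inner x y + 12 * inner x y"
proof -
  have "Ric (\<lambda>x y z u. pi2 I J K x y z u + 6 * pi1 x y z u) x y = 
     - 6 * (\<Sum>e\<in>Basis. inner y (I e) * inner e (I x)) - 6 * (\<Sum>e\<in>Basis. inner y (J e) * inner e (J x))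
     - 6 * (\<Sum>e\<in>Basis. inner y (K e) * inner e (K x))
   + 6 * (inner x y * (\<Sum>e\<in>Basis. inner e (e::'v))) - 6 * (\<Sum>e\<in>Basis. inner e x * inner e y)"
    unfolding Ric_def Pipw
    by (simp add: sum.distrib sum_subtractf sum_distrib_left)
  also have "\<dots> = 6 * real DIM('v) * inner x y + 12 * inner x y"
    by (simp add: sC lin_contract[OF linil] inner_Basis inner_commute[of y x])
  finally show ?thesis .
qed

lemma cxI: "cx I" and cxJ: "cx J" and cxK: "cx K"
  using linI linJ linK by (auto simp: cx_def)
end

context quatb begin
lemma badd: "b (x + y) z = b x z + b y z" "b z (x + y) = b z x + b z y"
  "b (c *\<^sub>R x) z = c * b x z" "b z (c *\<^sub>R x) = c * b z x"
  using bl by (auto simp: bilin_def real_vector.linear_add[where f="\<lambda>x. b x z" for z] real_vector.linear_add linear_cmul[where f="\<lambda>x. b x z" for z] linear_cmul)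

lemmas Dops = DopIb DopJb DopKb DopIg DopJg DopKg
definition "trm A x y z u = 2 * b x (A y) * inner z (A u) + 2 * inner x (A y) * b z (A u)
  + b x (A z) * inner y (A u) + b y (A u) * inner x (A z) - b x (A u) * inner y (A z) - b y (A z) * inner x (A u)"

lemma RRf: "RR x y z u = 4 * (trm I x y z u + trm J x y z u + trm K x y z u)
   + 12 * (b x z * inner y u - b x u * inner y z + inner x z * b y u - inner x u * b y z)"
  unfolding RR_def theta_def psi_def symprod_def tens_def wedge_def sumA_def trm_def
  by (simp add: Dops field_simps)

lemmas RRexp = RRf trm_def

lemma RRml: "multilin4 RR"
  unfolding multilin4_def
  by (intro conjI allI linearI) (simp_all add: RRexp Dops addI scI badd inner_add_left inner_add_right algebra_simps)

lemma RRpw: "RR x e y e = 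
   - 12 * (b x (I e) * inner e (I y)) - 12 * (b y (I e) * inner e (I x))
   - 12 * (b x (J e) * inner e (J y)) - 12 * (b y (J e) * inner e (J x))
   - 12 * (b x (K e) * inner e (K y)) - 12 * (b y (K e) * inner e (K x))
   + 12 * (b x y * inner e e) - 12 * (b x e * inner e y) + 12 * (inner x y * b e e) - 12 * (b y e * inner e x)"
  unfolding RRexp
  by (simp add: bordI[of e x] bordJ[of e x] bordK[of e x] bordI[of e y] bordJ[of e y] bordK[of e y]
     ordI[of x e] ordJ[of x e] ordK[of x e] ordI[of y e] ordJ[of y e] ordK[of y e] bs[of e x] bs[of e y]
     inner_commute[of x e] inner_commute[of y e] algebra_simps)

lemma linb: "linear (b x)" using bl by (simp add: bilin_def)

lemma sA: assumes "A \<in> {I,J,K}" shows "(\<Sum>e\<in>Basis. b x (A e) * inner e (A y)) = - b x y"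
proof -
  have l: "linear A" using assms linI linJ linK by auto
  have "(\<Sum>e\<in>Basis. b x (A e) * inner e (A y)) = b x (A (A y))"
    by (rule lin_contract[of "\<lambda>e. b x (A e)"]) (rule linear_compose[OF l linb, unfolded o_def])
  also have "\<dots> = - b x y" using assms by auto
  finally show ?thesis .
qed

lemma sB: "(\<Sum>e\<in>Basis. b x e * inner e y) = b x y"
  by (rule lin_contract[OF linb])

lemma sumee: "(\<Sum>e\<in>(Basis::'v set). inner e e) = real DIM('v)"
  by (simp add: inner_Basis)

lemma Ric_RR: assumes "(\<Sum>e\<in>Basis. b e e) = 0"
  shows "Ric RR x y = 12 * real DIM('v) * b x y + 48 * b x y"
proof -
  have "Ric RR x y = 
   - 12 * (\<Sum>e\<in>Basis. b x (I e) * inner e (I y)) - 12 * (\<Sum>e\<in>Basis. b y (I e) * inner e (I x))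
   - 12 * (\<Sum>e\<in>Basis. b x (J e) * inner e (J y)) - 12 * (\<Sum>e\<in>Basis. b y (J e) * inner e (J x))
   - 12 * (\<Sum>e\<in>Basis. b x (K e) * inner e (K y)) - 12 * (\<Sum>e\<in>Basis. b y (K e) * inner e (K x))
   + 12 * (b x y * (\<Sum>e\<in>Basis. inner e (e::'v))) - 12 * (\<Sum>e\<in>Basis. b x e * inner e y) 
   + 12 * (inner x y * (\<Sum>e\<in>Basis. b e e)) - 12 * (\<Sum>e\<in>Basis. b y e * inner e x)"
    unfolding Ric_def RRpw
    by (simp add: sum.distrib sum_subtractf sum_distrib_left)
  also have "\<dots> = 12 * real DIM('v) * b x y + 48 * b x y"
    by (simp add: sA sB sumee assms bs[of y x])
  finally show ?thesis .
qed

end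


context quatb begin
lemma RL: "Lop I J K RR x y z u = 6 * RR x y z u"
  unfolding Lop_def sumA_def sum4 act4_def RRf trm_def
  by (simp add: ords[of y x] ords[of z x] ords[of u x] ords[of z y] ords[of u y] ords[of u z] algebra_simps)

lemma Rsym: "RR x y z u = - RR y x z u" "RR x y z u = - RR x y u z" "RR x y z u = RR z u x y"
   "RR x y z u + RR y z x u + RR z x y u = 0"
  unfolding RR_def theta_def psi_def sp6 wedge_def sumA_def
  by (simp_all add: Dops ords[of y x] ords[of z x] ords[of u x] ords[of z y] ords[of u y] ords[of u z] algebra_simps)

lemma RLs: "Lsig I J K RR x y z u = 0"
  unfolding Lsig_def sumA_def act4_def Defs.sigma_def RR_def theta_def psi_def sp6 wedge_def
  by (simp add: Dops ords[of y x] ords[of z x] ords[of u x] ords[of z y] ords[of u y] ords[of u z])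
end

lemma Ric_rules: assumes "multilin4 R" shows
  "Ric R (x1 + x2) y = Ric R x1 y + Ric R x2 y" "Ric R x (y1 + y2) = Ric R x y1 + Ric R x y2"
  "Ric R (c *\<^sub>R x) y = c * Ric R x y" "Ric R x (c *\<^sub>R y) = c * Ric R x y"
  unfolding Ric_def by (simp_all add: ml_rules[OF assms] sum.distrib sum_distrib_left)

theorem proposition4p2:
  fixes I J K :: "'v::euclidean_space \<Rightarrow> 'v" and n :: nat
  assumes "DIM('v) = 4 * n"
    and "quaternionic I J K"
  shows "(\<forall>b\<in>Lambda20 I J K.
            (let R = (\<lambda>x y z u. theta I J K b inner x y z u + 12 * psi b inner x y z u)
             in R \<in> curv_tensors
                \<and> Lop I J K R = (\<lambda>x y z u. 6 * R x y z u)
                \<and> Lsig I J K R = (\<lambda>x y z u. 0)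
                \<and> Ric R = (\<lambda>x y. 48 * (real n + 1) * b x y)))
       \<and> (\<exists>c::real. c \<noteq> 0 \<and>
            (\<lambda>x y z u. theta I J K inner inner x y z u + 12 * psi inner inner x y z u)
              = (\<lambda>x y z u. c * (pi2 I J K x y z u + 6 * pi1 x y z u)))
       \<and> Ric (\<lambda>x y z u. pi2 I J K x y z u + 6 * pi1 x y z u)
            = (\<lambda>x y. 12 * (2 * real n + 1) * inner x y)
       \<and> (\<forall>R\<in>curv_tensors.
            Lop I J K R = (\<lambda>x y z u. 6 * R x y z u) \<and> Lsig I J K R = (\<lambda>x y z u. 0) \<longrightarrow>
              Ric R = RicQ I J K R
              \<and> (\<forall>A\<in>{I, J, K}. actfull2 A (Ric R) = Ric R)
              \<and> (\<exists>t::real. \<exists>b\<in>Lambda20 I J K. Ric R = (\<lambda>x y. t * inner x y + b x y)))"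
proof -
  interpret quat I J K by unfold_locales (rule assms(2))
  have dim: "real DIM('v) = 4 * real n" using assms(1) by simp
  have PA: "\<forall>b\<in>Lambda20 I J K.
            (let R = (\<lambda>x y z u. theta I J K b inner x y z u + 12 * psi b inner x y z u)
             in R \<in> curv_tensors
                \<and> Lop I J K R = (\<lambda>x y z u. 6 * R x y z u)
                \<and> Lsig I J K R = (\<lambda>x y z u. 0)
                \<and> Ric R = (\<lambda>x y. 48 * (real n + 1) * b x y))"
  proof
    fix b assume b: "b \<in> Lambda20 I J K"
    interpret quatb I J K b using b by unfold_locales (auto simp: Lambda20_def)
    have tr: "(\<Sum>e\<in>Basis. b e e) = 0" using b by (simp add: Lambda20_def)
    have Rdef: "(\<lambda>x y z u. theta I J K b inner x y z u + 12 * psi b inner x y z u) = RR"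
      by (simp add: RR_def)
    have c1: "RR \<in> curv_tensors"
      unfolding curv_tensors_def mem_Collect_eq using RRml Rsym by blast
    have c2: "Lop I J K RR = (\<lambda>x y z u. 6 * RR x y z u)" by (intro ext RL)
    have c3: "Lsig I J K RR = (\<lambda>x y z u. 0)" by (intro ext RLs)
    have c4: "Ric RR = (\<lambda>x y. 48 * (real n + 1) * b x y)"
      by (intro ext) (simp add: Ric_RR[OF tr] dim algebra_simps)
    show "let R = (\<lambda>x y z u. theta I J K b inner x y z u + 12 * psi b inner x y z u)
             in R \<in> curv_tensors
                \<and> Lop I J K R = (\<lambda>x y z u. 6 * R x y z u)
                \<and> Lsig I J K R = (\<lambda>x y z u. 0)
                \<and> Ric R = (\<lambda>x y. 48 * (real n + 1) * b x y)"
      unfolding Let_def Rdef using c1 c2 c3 c4 by blast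
  qed
  have PB: "\<exists>c::real. c \<noteq> 0 \<and>
            (\<lambda>x y z u. theta I J K inner inner x y z u + 12 * psi inner inner x y z u)
              = (\<lambda>x y z u. c * (pi2 I J K x y z u + 6 * pi1 x y z u))"
    by (rule exI[of _ 4]) (simp add: partb)
  have PB2: "Ric (\<lambda>x y z u. pi2 I J K x y z u + 6 * pi1 x y z u)
            = (\<lambda>x y. 12 * (2 * real n + 1) * inner x y)"
    by (intro ext) (simp add: Ric_Pi dim algebra_simps)
  have PC: "\<forall>R\<in>curv_tensors.
            Lop I J K R = (\<lambda>x y z u. 6 * R x y z u) \<and> Lsig I J K R = (\<lambda>x y z u. 0) \<longrightarrow>
              Ric R = RicQ I J K R
              \<and> (\<forall>A\<in>{I, J, K}. actfull2 A (Ric R) = Ric R)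
              \<and> (\<exists>t::real. \<exists>b\<in>Lambda20 I J K. Ric R = (\<lambda>x y. t * inner x y + b x y))"
  proof (intro ballI impI)
    fix R assume Rc: "R \<in> curv_tensors"
      and LL: "Lop I J K R = (\<lambda>x y z u. 6 * R x y z u) \<and> Lsig I J K R = (\<lambda>x y z u. 0)"
    interpret cR R by unfold_locales (rule Rc)
    have inv: "A \<in> {I,J,K} \<Longrightarrow> Dt A R x y z u = 0" for A x y z u
      using inv_from_L[OF cxI cxJ cxK ml conjunct1[OF LL]] by blast
    have invI: "\<And>x y z u. Dt I R x y z u = 0" and invJ: "\<And>x y z u. Dt J R x y z u = 0"
      and invK: "\<And>x y z u. Dt K R x y z u = 0" using inv by auto
    have Q1: "Ric R = RicQ I J K R"
    proof (intro ext)
      fix x y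
      have "(\<Sum>e\<in>Basis. Lsig I J K R x e y e) = 0" using conjunct2[OF LL] by simp
      then have "(6 * PP I R x (I y) - 2 * Ric R x y) + (6 * PP J R x (J y) - 2 * Ric R x y)
          + (6 * PP K R x (K y) - 2 * Ric R x y) = 0"
        unfolding Lsig_def sumA_def sum.distrib
        using LS[OF cxI invI, of x y, unfolded sum.distrib] LS[OF cxJ invJ, of x y, unfolded sum.distrib]
          LS[OF cxK invK, of x y, unfolded sum.distrib] by linarith
      moreover have "RicQ I J K R x y = PP I R x (I y) + PP J R x (J y) + PP K R x (K y)"
        by (simp add: RicQ_def sumA_def PP_def)
      ultimately show "Ric R x y = RicQ I J K R x y" by linarith
    qed
    have RAA: "A \<in> {I,J,K} \<Longrightarrow> Ric R (A x) (A y) = Ric R x y" for A x y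
      using RicAA[OF cxI invI] RicAA[OF cxJ invJ] RicAA[OF cxK invK] by auto
    have Q2: "\<forall>A\<in>{I, J, K}. actfull2 A (Ric R) = Ric R"
      by (auto simp: actfull2_def RAA)
    define t where "t = (\<Sum>e\<in>Basis. Ric R e e) / real DIM('v)"
    define bb where "bb = (\<lambda>x y. Ric R x y - t * inner x y)"
    have "bb \<in> Lambda20 I J K"
      unfolding Lambda20_def mem_Collect_eq
    proof (intro conjI ballI allI)
      show "bilin bb" unfolding bilin_def bb_def
        by (intro conjI allI linearI)
           (simp_all add: Ric_rules[OF ml] inner_add_left inner_add_right algebra_simps)
      show "bb x y = bb y x" for x y by (simp add: bb_def RicS inner_commute)
      show "(\<Sum>e\<in>Basis. bb e e) = 0"
        by (simp add: bb_def t_def sum_subtractf inner_Basis)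
      show "bb (A x) (A y) = bb x y" if "A \<in> {I,J,K}" for A x y
        using that RAA[OF that] orth[OF that] by (simp add: bb_def)
    qed
    moreover have "Ric R = (\<lambda>x y. t * inner x y + bb x y)" by (simp add: bb_def)
    ultimately have Q3: "\<exists>t::real. \<exists>b\<in>Lambda20 I J K. Ric R = (\<lambda>x y. t * inner x y + b x y)" by blast
    show "Ric R = RicQ I J K R \<and> (\<forall>A\<in>{I, J, K}. actfull2 A (Ric R) = Ric R)
          \<and> (\<exists>t::real. \<exists>b\<in>Lambda20 I J K. Ric R = (\<lambda>x y. t * inner x y + b x y))"
      using Q1 Q2 Q3 by blast
  qed
  show ?thesis using PA PB PB2 PC by blast
qed

end
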